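(* Under the uniform random scheduler, the expected running time of Protocol 1 (2-Slot protocol) on $n$ nodes, started with one node in $L_0$ and the others in $F$, until the leader's component spans all $n$ nodes is $O(\log n)$ parallel time (i.e. $O(n\log n)$ interactions).
   Context: Network constructor model: $n$ nodes, every pair may interact; each node pair has an edge state in $\{0,1\}$, initially $0$. At each step the uniform random scheduler picks an unordered pair of nodes uniformly at random among all $n(n-1)/2$ pairs, independently of the past, and updates the pair according to the transition rules (either ordering); unlisted triples are unchanged. Parallel time is the number of steps divided by $n$. Protocol 1 (2-Slot protocol): $Q=\{F,L_0,L_1,L_2,O_0,O_1,O_2\}$, rules $(L_0,F,0)\to(L_1,O_0,1)$, $(L_1,F,0)\to(L_2,O_0,1)$, $(O_0,F,0)\to(O_1,O_0,1)$, $(O_1,F,0)\to(O_2,O_0,1)$; the node moving from $F$ to $O_0$ becomes a child of the other node, and the leader's component is the set of nodes connected to the leader by active edges. *)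

theory Defs
  imports "HOL-Probability.Probability"
begin

datatype state = F | L0 | L1 | L2 | O0 | O1 | O2

text \<open>Transition rules on an ordered triple (state of first node, state of second node,
  edge state); None means the triple is not listed (no change).\<close>
fun delta :: "state \<Rightarrow> state \<Rightarrow> bool \<Rightarrow> (state \<times> state \<times> bool) option" where
  "delta L0 F False = Some (L1, O0, True)"
| "delta L1 F False = Some (L2, O0, True)"
| "delta O0 F False = Some (O1, O0, True)"
| "delta O1 F False = Some (O2, O0, True)"
| "delta _ _ _ = None"

text \<open>A configuration: node states (nodes are 0..n-1) and the set of active edges
  (each edge is a 2-element set of nodes).\<close>
type_synonym config = "(nat \<Rightarrow> state) \<times> nat set set"

definition apply_ordered :: "nat \<Rightarrow> nat \<Rightarrow> config \<Rightarrow> config option" where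
  "apply_ordered u v c =
     (case delta (fst c u) (fst c v) ({u, v} \<in> snd c) of
        None \<Rightarrow> None
      | Some (a, b, e) \<Rightarrow>
          Some ((fst c)(u := a, v := b),
                if e then insert {u, v} (snd c) else snd c - {{u, v}}))"

definition interact :: "nat set \<Rightarrow> config \<Rightarrow> config" where
  "interact p c =
     (let u = Min p; v = Max p in
      case apply_ordered u v c of
        Some c' \<Rightarrow> c'
      | None \<Rightarrow> (case apply_ordered v u c of Some c' \<Rightarrow> c' | None \<Rightarrow> c))"

definition pairs :: "nat \<Rightarrow> nat set set" where
  "pairs n = {{u, v} | u v. u < n \<and> v < n \<and> u \<noteq> v}"

definition step :: "nat \<Rightarrow> config \<Rightarrow> config pmf" where
  "step n c = map_pmf (\<lambda>p. interact p c) (pmf_of_set (pairs n))"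

definition init :: config where
  "init = ((\<lambda>i. if i = 0 then L0 else F), {})"

definition leader_component :: "config \<Rightarrow> nat set" where
  "leader_component c = {v. (0, v) \<in> {(x, y). {x, y} \<in> snd c \<and> x \<noteq> y}\<^sup>*}"

definition spans :: "nat \<Rightarrow> config \<Rightarrow> bool" where
  "spans n c \<longleftrightarrow> leader_component c = {0..<n}"

definition stopped_step :: "nat \<Rightarrow> config \<Rightarrow> config pmf" where
  "stopped_step n c = (if spans n c then return_pmf c else step n c)"

definition stopped_chain :: "nat \<Rightarrow> nat \<Rightarrow> config pmf" where
  "stopped_chain n k = ((\<lambda>p. bind_pmf p (stopped_step n)) ^^ k) (return_pmf init)"

text \<open>Expected number of interactions T until the leader's component spans all nodes:
  E[T] = sum over k of P(T > k).\<close>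
definition expected_steps :: "nat \<Rightarrow> ennreal" where
  "expected_steps n =
     (\<Sum>k. ennreal (measure_pmf.prob (stopped_chain n k) {c. \<not> spans n c}))"

definition expected_parallel_time :: "nat \<Rightarrow> ennreal" where
  "expected_parallel_time n = expected_steps n / ennreal (real n)"

end

theory Submission
  imports Defs
begin


fun sl :: "state \<Rightarrow> nat" where
  "sl L0 = 2" | "sl L1 = 1" | "sl O0 = 2" | "sl O1 = 1" | "sl _ = 0"

definition Aset :: "nat \<Rightarrow> config \<Rightarrow> nat set" where
  "Aset n c = {i. i < n \<and> fst c i \<noteq> F}"

definition Rel :: "config \<Rightarrow> (nat \<times> nat) set" where
  "Rel c = {(x, y). {x, y} \<in> snd c \<and> x \<noteq> y}"

definition Inv :: "nat \<Rightarrow> config \<Rightarrow> bool" where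
  "Inv n c \<longleftrightarrow> 0 \<in> Aset n c \<and>
     (\<forall>e\<in>snd c. \<exists>x y. e = {x, y} \<and> x \<noteq> y \<and> x \<in> Aset n c \<and> y \<in> Aset n c) \<and>
     (\<forall>v\<in>Aset n c. (0, v) \<in> (Rel c)\<^sup>*) \<and>
     (\<Sum>i\<in>Aset n c. sl (fst c i)) = card (Aset n c) + 1"

lemma delta_Some:
  assumes "delta x y z = Some (a, b, e)"
  shows "y = F \<and> z = False \<and> e \<and> b = O0 \<and> x \<noteq> F \<and> a \<noteq> F \<and> sl x = Suc (sl a)"
  using assms by (cases x; cases y; cases z) auto

lemma delta_F [simp]: "delta F y z = None"
  by (cases y; cases z) auto

lemma apply_ordered_Some:
  assumes "apply_ordered u v c = Some c'"
  shows "\<exists>a b. delta (fst c u) (fst c v) ({u,v} \<in> snd c) = Some (a, b, True) \<and>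
     c' = ((fst c)(u := a, v := b), insert {u, v} (snd c))"
proof (cases "delta (fst c u) (fst c v) ({u,v} \<in> snd c)")
  case None then show ?thesis using assms unfolding apply_ordered_def by simp
next
  case (Some t)
  obtain a b e where t: "t = (a, b, e)" by (cases t)
  have "e" using delta_Some Some t by blast
  then show ?thesis using assms Some t unfolding apply_ordered_def by auto
qed

lemma interact_lt:
  assumes "x < (y::nat)"
  shows "interact {x, y} c = (case apply_ordered x y c of Some c' \<Rightarrow> c'
        | None \<Rightarrow> (case apply_ordered y x c of Some c' \<Rightarrow> c' | None \<Rightarrow> c))"
proof -
  have m: "Min {x, y} = x" "Max {x, y} = y" using assms by auto
  show ?thesis unfolding interact_def Let_def m by (rule refl)
qed

lemma pairs_Min_Max:
  assumes "p \<in> pairs n"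
  shows "\<exists>u v. p = {u, v} \<and> u < n \<and> v < n \<and> u \<noteq> v \<and>
     interact p c = (case apply_ordered u v c of Some c' \<Rightarrow> c'
        | None \<Rightarrow> (case apply_ordered v u c of Some c' \<Rightarrow> c' | None \<Rightarrow> c))"
proof -
  obtain x y where p: "p = {x, y}" "x < n" "y < n" "x \<noteq> y" using assms unfolding pairs_def by auto
  show ?thesis
  proof (cases "x < y")
    case True
    show ?thesis
      by (rule exI[of _ x], rule exI[of _ y]) (simp add: p interact_lt[OF True])
  next
    case False
    then have "y < x" using p by auto
    have "p = {y, x}" using p by auto
    have e: "interact p c = (case apply_ordered y x c of Some c' \<Rightarrow> c'
        | None \<Rightarrow> (case apply_ordered x y c of Some c' \<Rightarrow> c' | None \<Rightarrow> c))"
      unfolding \<open>p = {y, x}\<close> by (rule interact_lt[OF \<open>y < x\<close>])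
    show ?thesis using e p \<open>p = {y, x}\<close> by blast
  qed
qed

lemma interact_cases:
  assumes "p \<in> pairs n"
  shows "interact p c = c \<or> (\<exists>u v a b. p = {u, v} \<and> u < n \<and> v < n \<and> u \<noteq> v \<and>
     delta (fst c u) (fst c v) ({u,v} \<in> snd c) = Some (a, b, True) \<and>
     interact p c = ((fst c)(u := a, v := b), insert {u, v} (snd c)))"
proof -
  obtain u v where uv: "p = {u, v}" "u < n" "v < n" "u \<noteq> v" and
    I: "interact p c = (case apply_ordered u v c of Some c' \<Rightarrow> c'
        | None \<Rightarrow> (case apply_ordered v u c of Some c' \<Rightarrow> c' | None \<Rightarrow> c))"
    using pairs_Min_Max[OF assms] by blast
  show ?thesis
  proof (cases "apply_ordered u v c")
    case (Some c')
    obtain a b where ab: "delta (fst c u) (fst c v) ({u,v} \<in> snd c) = Some (a, b, True)"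
      "c' = ((fst c)(u := a, v := b), insert {u, v} (snd c))" using apply_ordered_Some[OF Some] by blast
    have e: "interact p c = c'" using I Some by simp
    show ?thesis
      apply (rule disjI2)
      apply (rule exI[of _ u], rule exI[of _ v], rule exI[of _ a], rule exI[of _ b])
      using uv ab e by simp
  next
    case None
    show ?thesis
    proof (cases "apply_ordered v u c")
      case (Some c')
      obtain a b where ab: "delta (fst c v) (fst c u) ({v,u} \<in> snd c) = Some (a, b, True)"
        "c' = ((fst c)(v := a, u := b), insert {v, u} (snd c))" using apply_ordered_Some[OF Some] by blast
      have e: "interact p c = c'" using I Some None by simp
      have p: "p = {v, u}" using uv by auto
      show ?thesis
        apply (rule disjI2)
        apply (rule exI[of _ v], rule exI[of _ u], rule exI[of _ a], rule exI[of _ b])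
        using uv ab e p by simp
    next
      case None2: None
      show ?thesis using I None None2 by simp
    qed
  qed
qed

lemma Aset_sub: "Aset n c \<subseteq> {0..<n}" unfolding Aset_def by auto
lemma finite_Aset[simp]: "finite (Aset n c)" using finite_subset[OF Aset_sub] by blast
lemma card_Aset_le: "card (Aset n c) \<le> n"
  using card_mono[OF _ Aset_sub, of n c] by simp

lemma trans_Inv:
  assumes inv: "Inv n c" and uv: "u < n" "v < n" "u \<noteq> v"
    and d: "delta (fst c u) (fst c v) ({u,v} \<in> snd c) = Some (a, b, True)"
  shows "Inv n ((fst c)(u := a, v := b), insert {u, v} (snd c)) \<and>
     Aset n ((fst c)(u := a, v := b), insert {u, v} (snd c)) = insert v (Aset n c) \<and> v \<notin> Aset n c"
proof -
  define c' where "c' = ((fst c)(u := a, v := b), insert {u, v} (snd c))"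
  note D = delta_Some[OF d]
  have uA: "u \<in> Aset n c" and vA: "v \<notin> Aset n c" using D uv unfolding Aset_def by auto
  have A': "Aset n c' = insert v (Aset n c)" using D uv unfolding Aset_def c'_def by auto
  have R: "Rel c \<subseteq> Rel c'" "(u, v) \<in> Rel c'" using uv unfolding Rel_def c'_def by auto
  have RR: "(Rel c)\<^sup>* \<subseteq> (Rel c')\<^sup>*" using R(1) by (rule rtrancl_mono)
  have I1: "0 \<in> Aset n c'" using inv A' unfolding Inv_def by auto
  have I2: "\<forall>e\<in>snd c'. \<exists>x y. e = {x, y} \<and> x \<noteq> y \<and> x \<in> Aset n c' \<and> y \<in> Aset n c'"
  proof
    fix e assume "e \<in> snd c'"
    then have "e = {u, v} \<or> e \<in> snd c" unfolding c'_def by auto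
    then show "\<exists>x y. e = {x, y} \<and> x \<noteq> y \<and> x \<in> Aset n c' \<and> y \<in> Aset n c'"
    proof
      assume "e = {u, v}" then show ?thesis using uA A' uv by blast
    next
      assume "e \<in> snd c"
      then obtain x y where "e = {x, y}" "x \<noteq> y" "x \<in> Aset n c" "y \<in> Aset n c"
        using inv unfolding Inv_def by blast
      then show ?thesis using A' by blast
    qed
  qed
  have I3: "\<forall>w\<in>Aset n c'. (0, w) \<in> (Rel c')\<^sup>*"
  proof
    fix w assume "w \<in> Aset n c'"
    then have "w = v \<or> w \<in> Aset n c" using A' by auto
    then show "(0, w) \<in> (Rel c')\<^sup>*"
    proof
      assume "w = v"
      have "(0, u) \<in> (Rel c')\<^sup>*" using inv uA RR unfolding Inv_def by blast
      from rtrancl_into_rtrancl[OF this R(2)] show ?thesis using \<open>w = v\<close> by simp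
    next
      assume "w \<in> Aset n c" then show ?thesis using inv RR unfolding Inv_def by blast
    qed
  qed
  have S: "(\<Sum>i\<in>Aset n c. sl (fst c i)) = card (Aset n c) + 1" using inv unfolding Inv_def by blast
  have s1: "(\<Sum>i\<in>Aset n c. sl (fst c i)) = sl (fst c u) + (\<Sum>i\<in>Aset n c - {u}. sl (fst c i))"
    using uA by (simp add: sum.remove)
  have s2: "(\<Sum>i\<in>Aset n c. sl (fst c' i)) = sl (fst c' u) + (\<Sum>i\<in>Aset n c - {u}. sl (fst c' i))"
    using uA by (simp add: sum.remove)
  have s3: "(\<Sum>i\<in>Aset n c - {u}. sl (fst c' i)) = (\<Sum>i\<in>Aset n c - {u}. sl (fst c i))"
    using vA unfolding c'_def by (intro sum.cong) auto
  have s4: "(\<Sum>i\<in>Aset n c'. sl (fst c' i)) = sl (fst c' v) + (\<Sum>i\<in>Aset n c. sl (fst c' i))"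
    using A' vA by simp
  have "fst c' v = O0" "fst c' u = a" using D uv unfolding c'_def by auto
  then have I4: "(\<Sum>i\<in>Aset n c'. sl (fst c' i)) = card (Aset n c') + 1"
    using s1 s2 s3 s4 S D A' vA by simp
  have "Inv n c'" unfolding Inv_def using I1 I2 I3 I4 by (intro conjI)
  then show ?thesis using A' vA by (simp add: c'_def)
qed

lemma Inv_interact:
  assumes "Inv n c" "p \<in> pairs n"
  shows "Inv n (interact p c) \<and> Aset n c \<subseteq> Aset n (interact p c)"
proof -
  from interact_cases[OF assms(2), of c]
  show ?thesis
  proof
    assume "interact p c = c" then show ?thesis using assms(1) by simp
  next
    assume "\<exists>u v a b. p = {u, v} \<and> u < n \<and> v < n \<and> u \<noteq> v \<and>
     delta (fst c u) (fst c v) ({u,v} \<in> snd c) = Some (a, b, True) \<and>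
     interact p c = ((fst c)(u := a, v := b), insert {u, v} (snd c))"
    then obtain u v a b where h: "u < n" "v < n" "u \<noteq> v"
      "delta (fst c u) (fst c v) ({u,v} \<in> snd c) = Some (a, b, True)"
      "interact p c = ((fst c)(u := a, v := b), insert {u, v} (snd c))" by blast
    from trans_Inv[OF assms(1) h(1-4)] show ?thesis unfolding h(5) by auto
  qed
qed

lemma Aset_good:
  assumes inv: "Inv n c" and u: "u \<in> Aset n c" "0 < sl (fst c u)" and v: "v < n" "v \<notin> Aset n c"
  shows "Aset n (interact {u, v} c) = insert v (Aset n c)"
proof -
  have uv: "u < n" "u \<noteq> v" "fst c v = F" using u v unfolding Aset_def by auto
  have ne: "{u, v} \<notin> snd c"
  proof
    assume "{u, v} \<in> snd c"
    then obtain x y where "{u, v} = {x, y}" "x \<in> Aset n c" "y \<in> Aset n c"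
      using inv unfolding Inv_def by blast
    then show False using v by (metis doubleton_eq_iff)
  qed
  obtain a where d0: "delta (fst c u) F False = Some (a, O0, True)"
    using u(2) by (cases "fst c u") auto
  have d: "delta (fst c u) (fst c v) ({u,v} \<in> snd c) = Some (a, O0, True)"
    using d0 ne uv by simp
  have ao: "apply_ordered u v c = Some ((fst c)(u := a, v := O0), insert {u, v} (snd c))"
    unfolding apply_ordered_def using d by simp
  have ao2: "apply_ordered v u c = None"
    unfolding apply_ordered_def using uv by simp
  have I: "interact {u, v} c = ((fst c)(u := a, v := O0), insert {u, v} (snd c))"
  proof (cases "u < v")
    case True then show ?thesis using interact_lt[OF True, of c] ao by simp
  next
    case False then have "v < u" using uv by auto
    then show ?thesis using interact_lt[OF \<open>v < u\<close>, of c] ao ao2 by (simp add: insert_commute)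
  qed
  show ?thesis using trans_Inv[OF inv uv(1) v(1) uv(2) d] I by simp
qed

lemma LC:
  assumes inv: "Inv n c"
  shows "leader_component c = Aset n c"
proof -
  have lc: "leader_component c = {v. (0, v) \<in> (Rel c)\<^sup>*}"
    unfolding leader_component_def Rel_def by simp
  have "v \<in> Aset n c" if "(0, v) \<in> (Rel c)\<^sup>*" for v
    using that
  proof (induction rule: rtrancl_induct)
    case base then show ?case using inv unfolding Inv_def by blast
  next
    case (step y z)
    then have "{y, z} \<in> snd c" unfolding Rel_def by auto
    then obtain x' y' where "{y, z} = {x', y'}" "x' \<in> Aset n c" "y' \<in> Aset n c"
      using inv unfolding Inv_def by blast
    then show ?case by (metis doubleton_eq_iff)
  qed
  moreover have "\<forall>v\<in>Aset n c. (0, v) \<in> (Rel c)\<^sup>*" using inv unfolding Inv_def by blast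
  ultimately show ?thesis unfolding lc by blast
qed

lemma spans_iff:
  assumes "Inv n c"
  shows "spans n c \<longleftrightarrow> card (Aset n c) = n"
proof -
  have "Aset n c = {0..<n} \<longleftrightarrow> card (Aset n c) = n"
    using Aset_sub[of n c] by (metis card_atLeastLessThan card_subset_eq finite_atLeastLessThan minus_nat.diff_0)
  then show ?thesis unfolding spans_def LC[OF assms] .
qed



definition NN :: "nat \<Rightarrow> real" where "NN n = real (card (pairs n))"
definition w :: "nat \<Rightarrow> nat \<Rightarrow> real" where "w n k = 2 * NN n / (real (k + 1) * real (n - k))"
definition phi :: "nat \<Rightarrow> nat \<Rightarrow> real" where "phi n k = (\<Sum>j\<in>{k..<n}. w n j)"
definition Phi :: "nat \<Rightarrow> config \<Rightarrow> real" where "Phi n c = phi n (card (Aset n c))"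

lemma w_nonneg: "0 \<le> w n k" unfolding w_def NN_def by simp
lemma phi_nonneg: "0 \<le> phi n k" unfolding phi_def using w_nonneg by (simp add: sum_nonneg)
lemma Phi_nonneg: "0 \<le> Phi n c" unfolding Phi_def by (rule phi_nonneg)
lemma phi_anti: "k \<le> k' \<Longrightarrow> phi n k' \<le> phi n k"
  unfolding phi_def by (rule sum_mono2) (auto simp: w_nonneg)
lemma phi_Suc: "k < n \<Longrightarrow> phi n k = w n k + phi n (Suc k)"
  unfolding phi_def by (rule sum.atLeast_Suc_lessThan)

lemma finite_pairs: "finite (pairs n)"
proof -
  have "pairs n \<subseteq> Pow {0..<n}" unfolding pairs_def by auto
  then show ?thesis by (rule finite_subset) simp
qed

lemma pairs_ne: "2 \<le> n \<Longrightarrow> pairs n \<noteq> {}"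
proof -
  assume "2 \<le> n"
  then have "{0, 1} \<in> pairs n" unfolding pairs_def by force
  then show ?thesis by blast
qed

lemma card_pairs_le: "card (pairs n) \<le> n * n"
proof -
  have "pairs n \<subseteq> (\<lambda>(u, v). {u, v}) ` ({0..<n} \<times> {0..<n})" unfolding pairs_def by auto
  then have "card (pairs n) \<le> card ((\<lambda>(u, v). {u, v}) ` ({0..<n} \<times> {0..<n}))"
    by (rule card_mono[rotated]) simp
  also have "\<dots> \<le> card ({0..<n} \<times> {0..<n})" by (rule card_image_le) simp
  finally show ?thesis by simp
qed

lemma sl_le2: "sl x \<le> 2" by (cases x) auto

lemma drift_real:
  assumes n: "2 \<le> n" and inv: "Inv n c" and k: "card (Aset n c) < n"
  shows "(\<Sum>p\<in>pairs n. Phi n (interact p c)) + NN n \<le> NN n * Phi n c"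
proof -
  define A where "A = Aset n c"
  define kk where "kk = card A"
  define S where "S = {i\<in>A. 0 < sl (fst c i)}"
  define B where "B = {0..<n} - A"
  define G where "G = (\<lambda>(u, v). {u, v}) ` (S \<times> B)"
  have kkn: "kk < n" using k unfolding kk_def A_def .
  have finA: "finite A" unfolding A_def by simp
  have finS: "finite S" unfolding S_def using finA by simp
  have finB: "finite B" unfolding B_def by simp
  have SA: "S \<subseteq> A" unfolding S_def by auto
  have Asub: "A \<subseteq> {0..<n}" unfolding A_def by (rule Aset_sub)
  have cardB: "card B = n - kk" unfolding B_def kk_def using Asub finA
    by (simp add: card_Diff_subset)
  have Gsub: "G \<subseteq> pairs n"
  proof
    fix p assume "p \<in> G"
    then obtain u v where p: "p = {u, v}" "u \<in> S" "v \<in> B" unfolding G_def by auto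
    then have "u < n" "v < n" "u \<noteq> v" using SA Asub unfolding B_def by auto
    then show "p \<in> pairs n" unfolding pairs_def p by blast
  qed
  have inj: "inj_on (\<lambda>(u, v). {u, v}) (S \<times> B)"
  proof (rule inj_onI, clarify)
    fix u v u' v' assume h: "u \<in> S" "v \<in> B" "u' \<in> S" "v' \<in> B" "{u, v} = {u', v'}"
    then have "u \<in> A" "u' \<in> A" "v \<notin> A" "v' \<notin> A" using SA unfolding B_def by auto
    then show "u = u' \<and> v = v'" using h(5) by (metis doubleton_eq_iff)
  qed
  have cardG: "card G = card S * card B" unfolding G_def using card_image[OF inj] finS finB
    by (simp add: card_cartesian_product)
  have sumS: "kk + 1 \<le> 2 * card S"
  proof -
    have "kk + 1 = (\<Sum>i\<in>A. sl (fst c i))" using inv unfolding Inv_def A_def kk_def by simp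
    also have "\<dots> = (\<Sum>i\<in>S. sl (fst c i))"
      by (rule sum.mono_neutral_right[OF finA SA]) (auto simp: S_def)
    also have "\<dots> \<le> (\<Sum>i\<in>S. 2)" by (rule sum_mono) (rule sl_le2)
    finally show ?thesis by simp
  qed
  have Ggood: "Phi n (interact p c) = phi n (Suc kk)" if "p \<in> G" for p
  proof -
    obtain u v where p: "p = {u, v}" "u \<in> S" "v \<in> B" using \<open>p \<in> G\<close> unfolding G_def by auto
    have "Aset n (interact {u, v} c) = insert v A"
      using Aset_good[OF inv, of u v] p SA unfolding S_def B_def A_def by auto
    moreover have "v \<notin> A" using p unfolding B_def by auto
    ultimately show ?thesis unfolding Phi_def p kk_def using finA by simp
  qed
  have Gbad: "Phi n (interact p c) \<le> phi n kk" if "p \<in> pairs n" for p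
  proof -
    have "A \<subseteq> Aset n (interact p c)" using Inv_interact[OF inv that] unfolding A_def by blast
    then have "kk \<le> card (Aset n (interact p c))" unfolding kk_def by (rule card_mono[rotated]) simp
    then show ?thesis unfolding Phi_def by (rule phi_anti)
  qed
  have "(\<Sum>p\<in>pairs n. Phi n (interact p c)) \<le> (\<Sum>p\<in>pairs n. if p \<in> G then phi n (Suc kk) else phi n kk)"
    by (rule sum_mono) (auto simp: Ggood Gbad)
  also have "\<dots> = real (card G) * phi n (Suc kk) + real (card (pairs n) - card G) * phi n kk"
  proof -
    have "pairs n \<inter> G = G" using Gsub by blast
    moreover have "card (pairs n - G) = card (pairs n) - card G"
      using Gsub finite_pairs by (simp add: card_Diff_subset finite_subset)
    ultimately show ?thesis using finite_pairs
      by (simp add: sum.If_cases Diff_eq[symmetric] Int_commute)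
  qed
  also have "\<dots> = NN n * phi n kk - real (card G) * w n kk"
  proof -
    have "card G \<le> card (pairs n)" using Gsub finite_pairs by (rule card_mono[rotated])
    then have r: "real (card (pairs n) - card G) = NN n - real (card G)" unfolding NN_def by simp
    have ph: "phi n kk = w n kk + phi n (Suc kk)" using k unfolding kk_def A_def by (rule phi_Suc)
    show ?thesis unfolding r ph by (simp add: algebra_simps)
  qed
  also have "\<dots> \<le> NN n * phi n kk - NN n"
  proof -
    have pos: "0 < real (kk + 1) * real (n - kk)" using k unfolding kk_def A_def by simp
    have "real (kk + 1) * real (n - kk) \<le> 2 * real (card G)"
    proof -
      have "real (kk + 1) \<le> 2 * real (card S)" using sumS by linarith
      then have "real (kk + 1) * real (n - kk) \<le> 2 * real (card S) * real (n - kk)"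
        by (rule mult_right_mono) simp
      then show ?thesis using cardG cardB by simp
    qed
    then have "NN n * (real (kk + 1) * real (n - kk)) \<le> NN n * (2 * real (card G))"
      by (rule mult_left_mono) (simp add: NN_def)
    define D where "D = real (kk + 1) * real (n - kk)"
    have e1: "real (card G) * w n kk = NN n * (2 * real (card G)) / D"
      unfolding w_def D_def by simp
    have "NN n * D / D \<le> NN n * (2 * real (card G)) / D"
      using \<open>NN n * (real (kk + 1) * real (n - kk)) \<le> NN n * (2 * real (card G))\<close> pos
      unfolding D_def by (intro divide_right_mono) auto
    then have "NN n \<le> real (card G) * w n kk" unfolding e1 using pos D_def kkn by simp
    then show ?thesis by simp
  qed
  finally show ?thesis unfolding Phi_def A_def kk_def by simp
qed



lemma step_int:
  assumes n: "2 \<le> n"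
  shows "(\<integral>\<^sup>+d. ennreal (Phi n d) \<partial>measure_pmf (step n c)) =
         ennreal ((\<Sum>p\<in>pairs n. Phi n (interact p c)) / NN n)"
proof -
  have "(\<integral>\<^sup>+d. ennreal (Phi n d) \<partial>measure_pmf (step n c)) =
      (\<integral>\<^sup>+p. ennreal (Phi n (interact p c)) \<partial>measure_pmf (pmf_of_set (pairs n)))"
    unfolding step_def by simp
  also have "\<dots> = (\<Sum>p\<in>pairs n. ennreal (Phi n (interact p c))) / of_nat (card (pairs n))"
    by (rule nn_integral_pmf_of_set[OF pairs_ne[OF n] finite_pairs])
  also have "\<dots> = ennreal (\<Sum>p\<in>pairs n. Phi n (interact p c)) / ennreal (NN n)"
    unfolding NN_def by (simp add: Phi_nonneg ennreal_of_nat_eq_real_of_nat)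
  also have "\<dots> = ennreal ((\<Sum>p\<in>pairs n. Phi n (interact p c)) / NN n)"
  proof (rule divide_ennreal)
    show "0 \<le> (\<Sum>p\<in>pairs n. Phi n (interact p c))" by (simp add: sum_nonneg Phi_nonneg)
    show "0 < NN n" unfolding NN_def using pairs_ne[OF n] finite_pairs by (simp add: card_gt_0_iff)
  qed
  finally show ?thesis .
qed

lemma pointwise:
  assumes n: "2 \<le> n" and inv: "Inv n c"
  shows "(\<integral>\<^sup>+d. ennreal (Phi n d) \<partial>measure_pmf (stopped_step n c)) + indicator {c. \<not> spans n c} c
         \<le> ennreal (Phi n c)"
proof (cases "spans n c")
  case True
  then show ?thesis unfolding stopped_step_def by (simp add: Phi_nonneg)
next
  case False
  then have k: "card (Aset n c) < n" using spans_iff[OF inv] card_Aset_le[of n c] by simp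
  have NNpos: "0 < NN n" unfolding NN_def using pairs_ne[OF n] finite_pairs by (simp add: card_gt_0_iff)
  have D: "(\<Sum>p\<in>pairs n. Phi n (interact p c)) + NN n \<le> NN n * Phi n c"
    by (rule drift_real[OF n inv k])
  have "(\<Sum>p\<in>pairs n. Phi n (interact p c)) / NN n + 1 \<le> Phi n c"
  proof -
    have "((\<Sum>p\<in>pairs n. Phi n (interact p c)) + NN n) / NN n \<le> NN n * Phi n c / NN n"
      using D NNpos by (intro divide_right_mono) auto
    then show ?thesis using NNpos by (simp add: add_divide_distrib)
  qed
  then have "ennreal ((\<Sum>p\<in>pairs n. Phi n (interact p c)) / NN n) + 1 \<le> ennreal (Phi n c)"
    by (metis ennreal_1 ennreal_leI ennreal_plus zero_le_one divide_nonneg_nonneg sum_nonneg Phi_nonneg NNpos less_imp_le)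
  then show ?thesis using False step_int[OF n, of c] unfolding stopped_step_def by simp
qed

lemma chain_Suc: "stopped_chain n (Suc k) = bind_pmf (stopped_chain n k) (stopped_step n)"
  unfolding stopped_chain_def by simp

lemma Inv_init: "1 \<le> n \<Longrightarrow> Inv n init"
proof -
  assume n: "1 \<le> n"
  have A: "Aset n init = {0}" unfolding Aset_def init_def using n by auto
  show ?thesis unfolding Inv_def A by (simp add: init_def)
qed

lemma support_Inv:
  assumes n: "2 \<le> n"
  shows "c \<in> set_pmf (stopped_chain n k) \<Longrightarrow> Inv n c"
proof (induction k arbitrary: c)
  case 0
  then show ?case using Inv_init n unfolding stopped_chain_def by simp
next
  case (Suc k)
  then obtain d where d: "d \<in> set_pmf (stopped_chain n k)" "c \<in> set_pmf (stopped_step n d)"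
    unfolding chain_Suc by auto
  have invd: "Inv n d" using Suc.IH d(1) .
  show ?case
  proof (cases "spans n d")
    case True then show ?thesis using d invd unfolding stopped_step_def by simp
  next
    case False
    then have "c \<in> set_pmf (step n d)" using d unfolding stopped_step_def by simp
    then obtain p where "p \<in> pairs n" "c = interact p d"
      unfolding step_def using pairs_ne[OF n] finite_pairs by auto
    then show ?thesis using Inv_interact[OF invd] by blast
  qed
qed

lemma chain_bound:
  assumes n: "2 \<le> n"
  shows "(\<Sum>j<k. ennreal (measure_pmf.prob (stopped_chain n j) {c. \<not> spans n c}))
     + (\<integral>\<^sup>+c. ennreal (Phi n c) \<partial>measure_pmf (stopped_chain n k)) \<le> ennreal (Phi n init)"
proof (induction k)
  case 0
  then show ?case unfolding stopped_chain_def by (simp add: Phi_nonneg)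
next
  case (Suc k)
  let ?M = "stopped_chain n k"
  have P: "ennreal (measure_pmf.prob ?M {c. \<not> spans n c}) = (\<integral>\<^sup>+c. indicator {c. \<not> spans n c} c \<partial>measure_pmf ?M)"
    by (simp add: measure_pmf.emeasure_eq_measure[symmetric])
  have "ennreal (measure_pmf.prob ?M {c. \<not> spans n c}) + (\<integral>\<^sup>+c. ennreal (Phi n c) \<partial>measure_pmf (stopped_chain n (Suc k)))
      = (\<integral>\<^sup>+c. indicator {c. \<not> spans n c} c + (\<integral>\<^sup>+d. ennreal (Phi n d) \<partial>measure_pmf (stopped_step n c)) \<partial>measure_pmf ?M)"
    unfolding P chain_Suc nn_integral_bind_pmf by (rule nn_integral_add[symmetric]) auto
  also have "\<dots> \<le> (\<integral>\<^sup>+c. ennreal (Phi n c) \<partial>measure_pmf ?M)"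
  proof (rule nn_integral_mono_AE)
    show "AE c in measure_pmf ?M. indicator {c. \<not> spans n c} c + (\<integral>\<^sup>+d. ennreal (Phi n d) \<partial>measure_pmf (stopped_step n c))
        \<le> ennreal (Phi n c)"
      unfolding AE_measure_pmf_iff using pointwise[OF n] support_Inv[OF n] by (simp add: add.commute)
  qed
  finally have "ennreal (measure_pmf.prob ?M {c. \<not> spans n c}) + (\<integral>\<^sup>+c. ennreal (Phi n c) \<partial>measure_pmf (stopped_chain n (Suc k)))
     \<le> (\<integral>\<^sup>+c. ennreal (Phi n c) \<partial>measure_pmf ?M)" .
  then have "(\<Sum>j<Suc k. ennreal (measure_pmf.prob (stopped_chain n j) {c. \<not> spans n c}))
     + (\<integral>\<^sup>+c. ennreal (Phi n c) \<partial>measure_pmf (stopped_chain n (Suc k)))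
     \<le> (\<Sum>j<k. ennreal (measure_pmf.prob (stopped_chain n j) {c. \<not> spans n c}))
     + (\<integral>\<^sup>+c. ennreal (Phi n c) \<partial>measure_pmf ?M)"
    by (simp add: add.assoc add_left_mono)
  then show ?case using Suc.IH by (rule order_trans)
qed

lemma expected_steps_le:
  assumes n: "2 \<le> n"
  shows "expected_steps n \<le> ennreal (Phi n init)"
  unfolding expected_steps_def
proof (rule suminf_le_const[OF summableI])
  fix k
  show "(\<Sum>j<k. ennreal (measure_pmf.prob (stopped_chain n j) {c. \<not> spans n c})) \<le> ennreal (Phi n init)"
    using chain_bound[OF n, of k] by (rule order_trans[rotated]) simp
qed



lemma harm_bound: "1 \<le> m \<Longrightarrow> (\<Sum>j\<in>{1..m}. 1 / real j) \<le> 1 + ln (real m)"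
proof (induction m rule: nat_induct_at_least)
  case base then show ?case by simp
next
  case (Suc m)
  have m: "0 < real m" using Suc.hyps by simp
  have "ln (real m / real (Suc m)) \<le> real m / real (Suc m) - 1"
    by (rule ln_le_minus_one) (use m in simp)
  moreover have "ln (real m / real (Suc m)) = ln (real m) - ln (real (Suc m))"
    using m by (simp add: ln_div)
  moreover have "real m / real (Suc m) - 1 = - (1 / real (Suc m))"
    by (simp add: field_simps)
  ultimately have "1 / real (Suc m) \<le> ln (real (Suc m)) - ln (real m)" by linarith
  then show ?case using Suc.IH by simp
qed

lemma term_bound:
  fixes a b X :: real
  assumes "1 \<le> a" "1 \<le> b" "0 \<le> X"
  shows "2 * X / ((a + 1) * b) \<le> (2 * X / (a + 1 + b)) * (1 / a + 1 / b)"
proof -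
  have eq: "2 * X / ((a + 1) * b) = (2 * X / (a + 1 + b)) * (1 / (a + 1) + 1 / b)"
  proof -
    have nz: "a + 1 \<noteq> 0" "b \<noteq> 0" "a + 1 + b \<noteq> 0" "(a + 1) * b \<noteq> 0" using assms by auto
    have e: "1 / (a + 1) + 1 / b = (a + 1 + b) / ((a + 1) * b)" using nz by (simp add: field_simps)
    show ?thesis unfolding e using nz by simp
  qed
  have "1 / (a + 1) \<le> 1 / a" using assms by (simp add: frac_le)
  then have "1 / (a + 1) + 1 / b \<le> 1 / a + 1 / b" by simp
  moreover have "0 \<le> 2 * X / (a + 1 + b)" using assms by simp
  ultimately show ?thesis unfolding eq by (rule mult_left_mono)
qed

lemma Phi_init_bound:
  assumes n: "3 \<le> n"
  shows "Phi n init \<le> 8 * real n * ln (real n)"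
proof -
  have A: "Aset n init = {0}" unfolding Aset_def init_def using n by auto
  have P: "Phi n init = (\<Sum>j\<in>{1..<n}. 2 * NN n / ((real j + 1) * real (n - j)))"
    unfolding Phi_def A phi_def w_def by (intro sum.cong) (auto simp: add.commute)
  define K where "K = 2 * NN n / (real n + 1)"
  have K0: "0 \<le> K" unfolding K_def NN_def by simp
  have "(\<Sum>j\<in>{1..<n}. 2 * NN n / ((real j + 1) * real (n - j)))
      \<le> (\<Sum>j\<in>{1..<n}. K * (1 / real j + 1 / real (n - j)))"
  proof (rule sum_mono)
    fix j assume j: "j \<in> {1..<n}"
    have "real j + 1 + real (n - j) = real n + 1" using j by simp
    then show "2 * NN n / ((real j + 1) * real (n - j)) \<le> K * (1 / real j + 1 / real (n - j))"
      using term_bound[of "real j" "real (n - j)" "NN n"] j unfolding K_def NN_def by (simp add: add.commute)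
  qed
  also have "\<dots> = K * ((\<Sum>j\<in>{1..<n}. 1 / real j) + (\<Sum>j\<in>{1..<n}. 1 / real (n - j)))"
    by (simp only: sum_distrib_left[symmetric] sum.distrib)
  also have "(\<Sum>j\<in>{1..<n}. 1 / real (n - j)) = (\<Sum>j\<in>{1..<n}. 1 / real j)"
  proof -
    have "(\<Sum>j\<in>{1..<n}. 1 / real (n - j)) = (\<Sum>i\<in>{1..<n}. 1 / real (n - (n + 1 - Suc i)))"
      by (rule sum.atLeastLessThan_rev)
    also have "\<dots> = (\<Sum>j\<in>{1..<n}. 1 / real j)" by (rule sum.cong) auto
    finally show ?thesis .
  qed
  also have "(\<Sum>j\<in>{1..<n}. 1 / real j) \<le> 1 + ln (real n)"
  proof -
    have "(\<Sum>j\<in>{1..<n}. 1 / real j) \<le> (\<Sum>j\<in>{1..n}. 1 / real j)" by (rule sum_mono2) auto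
    also have "\<dots> \<le> 1 + ln (real n)" using n by (intro harm_bound) simp
    finally show ?thesis .
  qed
  then have "K * ((\<Sum>j\<in>{1..<n}. 1 / real j) + (\<Sum>j\<in>{1..<n}. 1 / real j)) \<le> K * (2 * (1 + ln (real n)))"
    using K0 by (intro mult_left_mono) auto
  also have "K \<le> 2 * real n"
  proof -
    have "NN n \<le> real n * real n" unfolding NN_def using card_pairs_le[of n]
      by (metis of_nat_le_iff of_nat_mult)
    also have "\<dots> \<le> real n * (real n + 1)" by (rule mult_left_mono) auto
    finally have "2 * NN n \<le> 2 * real n * (real n + 1)" by simp
    then show ?thesis unfolding K_def by (simp add: divide_le_eq)
  qed
  then have "K * (2 * (1 + ln (real n))) \<le> 2 * real n * (2 * (1 + ln (real n)))"
  proof (rule mult_right_mono)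
    show "0 \<le> 2 * (1 + ln (real n))" using n by simp
  qed
  also have "\<dots> \<le> 8 * real n * ln (real n)"
  proof -
    have "exp 1 \<le> real n" using exp_le n by linarith
    then have "1 \<le> ln (real n)" using n by (subst ln_ge_iff) auto
    then show ?thesis using n by (simp add: algebra_simps)
  qed
  finally show ?thesis unfolding P by simp
qed

theorem theorem6:
  shows "\<exists>C N0. \<forall>n\<ge>N0. expected_parallel_time n \<le> ennreal (C * ln (real n))"
proof (rule exI[of _ 8], rule exI[of _ 3], intro allI impI)
  fix n :: nat assume n: "3 \<le> n"
  have "expected_steps n \<le> ennreal (8 * real n * ln (real n))"
  proof -
    have n2: "2 \<le> n" using n by simp
    have "ennreal (Phi n init) \<le> ennreal (8 * real n * ln (real n))"
      by (rule ennreal_leI[OF Phi_init_bound[OF n]])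
    then show ?thesis using expected_steps_le[OF n2] by (rule order_trans[rotated])
  qed
  then have "expected_parallel_time n \<le> ennreal (8 * real n * ln (real n)) / ennreal (real n)"
    unfolding expected_parallel_time_def by (rule divide_right_mono_ennreal)
  also have "\<dots> = ennreal (8 * ln (real n))"
  proof -
    have "0 \<le> 8 * real n * ln (real n)" using n by simp
    then have "ennreal (8 * real n * ln (real n)) / ennreal (real n) = ennreal (8 * real n * ln (real n) / real n)"
      using n by (intro divide_ennreal) auto
    then show ?thesis using n by simp
  qed
  finally show "expected_parallel_time n \<le> ennreal (8 * ln (real n))" .
qed


end
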